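(* For every CF program $\mathtt{p}$ there is a polynomial $\pi$ such that $\#\mathit{Reach}_{\mathtt{p}}(x) \le \pi(|x|)$ for all $x \in \{0,1\}^*$.
   Context: CF ("cons-free") is a first-order, call-by-value functional language over booleans and bit lists $\{0,1\}^*$. A program is a finite sequence of mutually recursive function definitions $\mathtt{f\ x1 \dots xm = e}$ ($m\ge0$), the first being a one-argument entry function. Expressions are $\mathtt{True}$, $\mathtt{False}$, $\mathtt{[]}$, variables, base calls $\mathtt{not}$, $\mathtt{null}$, $\mathtt{head}$, $\mathtt{tail}$, conditionals $\mathtt{if\ e_0\ then\ e_1\ else\ e_2}$, and calls $\mathtt{f\ e_1\dots e_m}$ of defined functions; there are no list constructors. Semantics is standard big-step call-by-value evaluation: a call evaluates its arguments to values $w_i$ and then evaluates the body of $\mathtt{f}$ in the environment $\rho=[\mathtt{x1}\mapsto w_1,\dots,\mathtt{xm}\mapsto w_m]$; the program on input $x$ starts by evaluating the entry body in $[\mathtt{x}\mapsto x]$. $\mathit{Reach}_{\mathtt{p}}(x)$ is the set of pairs $(\mathtt{f},\rho)$ such that the body of the defined function $\mathtt{f}$ is called at least once with environment $\rho$ during the computation of $\mathtt{p}$ on input $x$; $\#$ denotes cardinality. *)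

theory Defs
  imports "HOL-Computational_Algebra.Polynomial"
begin

(* Values of CF: booleans and bit lists (bit 1 = True, bit 0 = False). *)
datatype val = B bool | L "bool list"

(* Expressions. Variables are referred to by their parameter position (x1 = Var 0, ...);
   defined functions by their index in the program. *)
datatype expr =
    ETrue | EFalse | ENil
  | Var nat
  | Not expr | Null expr | Head expr | Tail expr
  | If expr expr expr
  | Call nat "expr list"

(* A program: list of definitions (arity m, body); the first is the entry function. *)
type_synonym prog = "(nat \<times> expr) list"

fun wf_expr :: "prog \<Rightarrow> nat \<Rightarrow> expr \<Rightarrow> bool" where
  "wf_expr p m ETrue = True"
| "wf_expr p m EFalse = True"
| "wf_expr p m ENil = True"
| "wf_expr p m (Var i) = (i < m)"
| "wf_expr p m (Not e) = wf_expr p m e"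
| "wf_expr p m (Null e) = wf_expr p m e"
| "wf_expr p m (Head e) = wf_expr p m e"
| "wf_expr p m (Tail e) = wf_expr p m e"
| "wf_expr p m (If e0 e1 e2) = (wf_expr p m e0 \<and> wf_expr p m e1 \<and> wf_expr p m e2)"
| "wf_expr p m (Call g es) =
     (g < length p \<and> length es = fst (p ! g) \<and> (\<forall>e \<in> set es. wf_expr p m e))"

definition wf_prog :: "prog \<Rightarrow> bool" where
  "wf_prog p \<longleftrightarrow> p \<noteq> [] \<and> fst (p ! 0) = 1 \<and> (\<forall>(m, e) \<in> set p. wf_expr p m e)"

inductive eval :: "prog \<Rightarrow> val list \<Rightarrow> expr \<Rightarrow> val \<Rightarrow> bool"
  and evals :: "prog \<Rightarrow> val list \<Rightarrow> expr list \<Rightarrow> val list \<Rightarrow> bool"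
  for p :: prog where
  ev_true: "eval p r ETrue (B True)"
| ev_false: "eval p r EFalse (B False)"
| ev_nil: "eval p r ENil (L [])"
| ev_var: "i < length r \<Longrightarrow> eval p r (Var i) (r ! i)"
| ev_not: "eval p r e (B b) \<Longrightarrow> eval p r (Not e) (B (\<not> b))"
| ev_null: "eval p r e (L xs) \<Longrightarrow> eval p r (Null e) (B (xs = []))"
| ev_head: "eval p r e (L (a # xs)) \<Longrightarrow> eval p r (Head e) (B a)"
| ev_tail: "eval p r e (L (a # xs)) \<Longrightarrow> eval p r (Tail e) (L xs)"
| ev_if_t: "eval p r e0 (B True) \<Longrightarrow> eval p r e1 v \<Longrightarrow> eval p r (If e0 e1 e2) v"
| ev_if_f: "eval p r e0 (B False) \<Longrightarrow> eval p r e2 v \<Longrightarrow> eval p r (If e0 e1 e2) v"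
| ev_call: "evals p r es ws \<Longrightarrow> f < length p \<Longrightarrow> fst (p ! f) = length ws \<Longrightarrow>
             eval p ws (snd (p ! f)) v \<Longrightarrow> eval p r (Call f es) v"
| evs_nil: "evals p r [] []"
| evs_cons: "eval p r e v \<Longrightarrow> evals p r es vs \<Longrightarrow> evals p r (e # es) (v # vs)"

(* calls p r e (g, ws): while evaluating e in environment r, the body of g is
   (directly) called with environment ws. *)
inductive calls :: "prog \<Rightarrow> val list \<Rightarrow> expr \<Rightarrow> nat \<times> val list \<Rightarrow> bool"
  and callss :: "prog \<Rightarrow> val list \<Rightarrow> expr list \<Rightarrow> nat \<times> val list \<Rightarrow> bool"
  for p :: prog where
  c_not: "calls p r e c \<Longrightarrow> calls p r (Not e) c"
| c_null: "calls p r e c \<Longrightarrow> calls p r (Null e) c"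
| c_head: "calls p r e c \<Longrightarrow> calls p r (Head e) c"
| c_tail: "calls p r e c \<Longrightarrow> calls p r (Tail e) c"
| c_if0: "calls p r e0 c \<Longrightarrow> calls p r (If e0 e1 e2) c"
| c_if1: "eval p r e0 (B True) \<Longrightarrow> calls p r e1 c \<Longrightarrow> calls p r (If e0 e1 e2) c"
| c_if2: "eval p r e0 (B False) \<Longrightarrow> calls p r e2 c \<Longrightarrow> calls p r (If e0 e1 e2) c"
| c_args: "callss p r es c \<Longrightarrow> calls p r (Call f es) c"
| c_call: "evals p r es ws \<Longrightarrow> f < length p \<Longrightarrow> fst (p ! f) = length ws \<Longrightarrow>
             calls p r (Call f es) (f, ws)"
| cs_hd: "calls p r e c \<Longrightarrow> callss p r (e # es) c"
| cs_tl: "eval p r e v \<Longrightarrow> callss p r es c \<Longrightarrow> callss p r (e # es) c"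

inductive_set Reach :: "prog \<Rightarrow> bool list \<Rightarrow> (nat \<times> val list) set"
  for p :: prog and x :: "bool list" where
  reach_entry: "(0, [L x]) \<in> Reach p x"
| reach_step: "(f, r) \<in> Reach p x \<Longrightarrow> f < length p \<Longrightarrow> calls p r (snd (p ! f)) c \<Longrightarrow>
               c \<in> Reach p x"

end

theory Submission
  imports Defs
begin

definition VV :: "bool list \<Rightarrow> val set" where
  "VV x = range B \<union> (\<lambda>k. L (drop k x)) ` {..length x}"

lemma VV_finite: "finite (VV x)"
  unfolding VV_def by simp

lemma VV_card: "card (VV x) \<le> length x + 3"
proof -
  have "card (VV x) \<le> card (range B) + card ((\<lambda>k. L (drop k x)) ` {..length x})"
    unfolding VV_def by (rule card_Un_le)
  also have "card (range B) \<le> 2"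
  proof -
    have "range B = {B True, B False}" by (auto intro: bool.exhaust)
    then show ?thesis by (simp add: card_insert_if)
  qed
  also have "card ((\<lambda>k. L (drop k x)) ` {..length x}) \<le> length x + 1"
    using card_image_le[of "{..length x}" "\<lambda>k. L (drop k x)"] by simp
  finally show ?thesis by simp
qed

lemma drop_tl_VV: "drop k x = a # xs \<Longrightarrow> L xs \<in> VV x"
proof -
  assume h: "drop k x = a # xs"
  then have "drop (Suc k) x = xs" by (metis drop_Suc list.sel(3) tl_drop)
  moreover have "Suc k \<le> length x" using h
    by (metis Suc_leI drop_eq_Nil2 leI list.distinct(1))
  ultimately show ?thesis unfolding VV_def by force
qed

lemma eval_VV:
  "eval p r e v \<Longrightarrow> set r \<subseteq> VV x \<Longrightarrow> v \<in> VV x"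
  "evals p r es vs \<Longrightarrow> set r \<subseteq> VV x \<Longrightarrow> set vs \<subseteq> VV x"
proof (induction rule: eval_evals.inducts)
  case (ev_nil r)
  have "L (drop (length x) x) \<in> VV x" unfolding VV_def by blast
  then show ?case by simp
next
  case (ev_tail r e a xs)
  then have "L (a # xs) \<in> VV x" by blast
  then obtain k where "drop k x = a # xs" unfolding VV_def by auto
  then show ?case by (rule drop_tl_VV)
next
  case (ev_var i r)
  then show ?case by (meson nth_mem subsetD)
qed (auto simp: VV_def)

lemma calls_VV:
  "calls p r e c \<Longrightarrow> set r \<subseteq> VV x \<Longrightarrow>
     fst c < length p \<and> length (snd c) = fst (p ! fst c) \<and> set (snd c) \<subseteq> VV x"
  "callss p r es c \<Longrightarrow> set r \<subseteq> VV x \<Longrightarrow>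
     fst c < length p \<and> length (snd c) = fst (p ! fst c) \<and> set (snd c) \<subseteq> VV x"
proof (induction rule: calls_callss.inducts)
  case (c_call r es ws f)
  then show ?case using eval_VV(2) by auto
qed auto

definition SS :: "prog \<Rightarrow> bool list \<Rightarrow> (nat \<times> val list) set" where
  "SS p x = Sigma {..<length p} (\<lambda>f. {ws. set ws \<subseteq> VV x \<and> length ws = fst (p ! f)})"

lemma Reach_SS:
  assumes "wf_prog p"
  shows "c \<in> Reach p x \<Longrightarrow> c \<in> SS p x"
proof (induction rule: Reach.induct)
  case reach_entry
  have "L x \<in> VV x" unfolding VV_def by (metis UnI2 atMost_iff drop0 image_eqI zero_le)
  then show ?case using assms unfolding SS_def wf_prog_def by auto
next
  case (reach_step f r c)
  then have "set r \<subseteq> VV x" unfolding SS_def by auto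
  from calls_VV(1)[OF reach_step(3) this] show ?case
    unfolding SS_def by (cases c) auto
qed

theorem lemma3:
  fixes p :: prog
  assumes "wf_prog p"
  shows "\<exists>\<pi> :: real poly. \<forall>x :: bool list.
           finite (Reach p x) \<and> real (card (Reach p x)) \<le> poly \<pi> (real (length x))"
proof -
  define M where "M = Max (fst ` set p)"
  define \<pi> :: "real poly" where "\<pi> = smult (real (length p)) ([:3, 1:] ^ M)"
  have "finite (Reach p x) \<and> real (card (Reach p x)) \<le> poly \<pi> (real (length x))" for x
  proof -
    have fin: "finite (SS p x)"
      unfolding SS_def
      by (intro finite_SigmaI) (auto intro: finite_lists_length_eq VV_finite)
    have sub: "Reach p x \<subseteq> SS p x" using Reach_SS[OF assms] by blast
    have "card (SS p x) = (\<Sum>f<length p. card {ws. set ws \<subseteq> VV x \<and> length ws = fst (p ! f)})"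
      unfolding SS_def
      by (rule card_SigmaI) (auto intro: finite_lists_length_eq VV_finite)
    also have "\<dots> = (\<Sum>f<length p. card (VV x) ^ fst (p ! f))"
      by (simp add: card_lists_length_eq VV_finite)
    also have "\<dots> \<le> (\<Sum>f<length p. (length x + 3) ^ M)"
    proof (rule sum_mono)
      fix f assume "f \<in> {..<length p}"
      then have "fst (p ! f) \<le> M" unfolding M_def by (intro Max_ge) auto
      then have "card (VV x) ^ fst (p ! f) \<le> (length x + 3) ^ fst (p ! f)"
        using VV_card by (simp add: power_mono)
      also have "\<dots> \<le> (length x + 3) ^ M" using \<open>fst (p ! f) \<le> M\<close>
        by (intro power_increasing) auto
      finally show "card (VV x) ^ fst (p ! f) \<le> (length x + 3) ^ M" .
    qed
    also have "\<dots> = length p * (length x + 3) ^ M" by simp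
    finally have "card (Reach p x) \<le> length p * (length x + 3) ^ M"
      using card_mono[OF fin sub] by linarith
    then have "real (card (Reach p x)) \<le> real (length p * (length x + 3) ^ M)"
      by linarith
    also have "\<dots> = poly \<pi> (real (length x))"
      unfolding \<pi>_def by (simp add: algebra_simps)
    finally show ?thesis using finite_subset[OF sub fin] by simp
  qed
  then show ?thesis by blast
qed

end
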